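(* Let $R$ be a right $\sigma$-reversible ring, where $\sigma$ is an endomorphism of $R$ with $\sigma(1)=1$. Then the set of idempotents of $R[[x;\sigma]]$ coincides with the set of idempotents of $R$ (viewed as constant series), and $R[[x;\sigma]]$ is abelian (all its idempotents are central).
   Context: All rings are associative with identity; $\sigma$ denotes a nonzero, non-identity ring endomorphism of $R$. The skew power series ring $R[[x;\sigma]]$ consists of all formal series $\sum_{i=0}^\infty a_i x^i$ with $a_i\in R$, added termwise and multiplied using distributivity and the rule $xa=\sigma(a)x$ for $a\in R$. $R$ is right $\sigma$-reversible if for all $a,b\in R$, $ab=0$ implies $b\sigma(a)=0$. *)

theory Defs
  imports "HOL-Computational_Algebra.Formal_Power_Series"
begin

text \<open>Ring endomorphism of a ring with identity (type class ring_1).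
  Preservation of 1 is NOT included; it is a separate hypothesis of the lemma.\<close>
definition ring_endo :: "('a::ring_1 \<Rightarrow> 'a) \<Rightarrow> bool" where
  "ring_endo \<sigma> \<longleftrightarrow> (\<forall>a b. \<sigma> (a + b) = \<sigma> a + \<sigma> b) \<and> (\<forall>a b. \<sigma> (a * b) = \<sigma> a * \<sigma> b)"

definition right_sigma_reversible :: "('a::ring_1 \<Rightarrow> 'a) \<Rightarrow> bool" where
  "right_sigma_reversible \<sigma> \<longleftrightarrow> (\<forall>a b. a * b = 0 \<longrightarrow> b * \<sigma> a = 0)"

text \<open>Multiplication in the skew power series ring R[[x;sigma]], with underlying
  series represented as formal power series (coefficient sequences):
  (sum a_i x^i)(sum b_j x^j) = sum_n (sum_{i+j=n} a_i sigma^i(b_j)) x^n,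
  since x a = sigma(a) x.  Addition is the usual termwise addition of fps.\<close>
definition skew_mult :: "('a::ring_1 \<Rightarrow> 'a) \<Rightarrow> 'a fps \<Rightarrow> 'a fps \<Rightarrow> 'a fps" where
  "skew_mult \<sigma> f g = Abs_fps (\<lambda>n. \<Sum>i\<le>n. fps_nth f i * (\<sigma> ^^ i) (fps_nth g (n - i)))"

end

theory Submission
  imports Defs
begin

lemma skew_nth: "fps_nth (skew_mult \<sigma> f g) n = (\<Sum>i\<le>n. fps_nth f i * (\<sigma> ^^ i) (fps_nth g (n - i)))"
  by (simp add: skew_mult_def)

lemma endo_diff:
  assumes "ring_endo \<sigma>" shows "\<sigma> (a - b) = \<sigma> a - \<sigma> b"
proof -
  have "\<sigma> a = \<sigma> ((a - b) + b)" by simp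
  also have "\<dots> = \<sigma> (a - b) + \<sigma> b" using assms unfolding ring_endo_def by blast
  finally show ?thesis by (simp add: algebra_simps)
qed

lemma idem_props:
  fixes \<sigma> :: "'a::ring_1 \<Rightarrow> 'a"
  assumes "ring_endo \<sigma>" "\<sigma> 1 = 1" "right_sigma_reversible \<sigma>" "c * c = c"
  shows "\<sigma> c = c" "\<And>r. c * r = r * c"
proof -
  have rev: "\<And>a b. a * b = 0 \<Longrightarrow> b * \<sigma> a = 0" using assms(3) by (simp add: right_sigma_reversible_def)
  have s1: "\<sigma> (1 - c) = 1 - \<sigma> c" using endo_diff[OF assms(1)] assms(2) by simp
  have "c * (1 - c) = 0" using assms(4) by (simp add: algebra_simps)
  hence "(1 - c) * \<sigma> c = 0" by (rule rev)
  hence A: "\<sigma> c = c * \<sigma> c" by (simp add: algebra_simps)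
  have "(1 - c) * c = 0" using assms(4) by (simp add: algebra_simps)
  hence "c * \<sigma> (1 - c) = 0" by (rule rev)
  hence B: "c = c * \<sigma> c" using s1 by (simp add: algebra_simps)
  show sc: "\<sigma> c = c" using A B by simp
  fix r
  have "c * ((1 - c) * r) = 0" using assms(4) by (simp add: algebra_simps mult.assoc[symmetric])
  hence "(1 - c) * r * \<sigma> c = 0" by (rule rev)
  hence X: "r * c = c * r * c" using sc by (simp add: algebra_simps)
  have "(1 - c) * (c * r) = 0" using assms(4) by (simp add: algebra_simps mult.assoc[symmetric])
  hence "c * r * \<sigma> (1 - c) = 0" by (rule rev)
  hence "c * r * (1 - c) = 0" using s1 sc by simp
  hence "c * r - c * r * c = 0" by (simp add: right_diff_distrib)
  hence Y: "c * r = c * r * c" by simp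
  show "c * r = r * c" using X Y by simp
qed

lemma pow_fix: "\<sigma> c = c \<Longrightarrow> (\<sigma> ^^ n) c = c"
  by (induction n) auto

lemma idem_const:
  fixes \<sigma> :: "'a::ring_1 \<Rightarrow> 'a"
  assumes "ring_endo \<sigma>" "\<sigma> 1 = 1" "right_sigma_reversible \<sigma>" "skew_mult \<sigma> e e = e"
  shows "e = fps_const ((fps_nth e 0))" "(fps_nth e 0) * (fps_nth e 0) = (fps_nth e 0)"
proof -
  define c where "c = (fps_nth e 0)"
  have cc: "c * c = c" using arg_cong[OF assms(4), of "\<lambda>f. (fps_nth f 0)"] by (simp add: skew_nth c_def)
  thus "(fps_nth e 0) * (fps_nth e 0) = (fps_nth e 0)" by (simp add: c_def)
  note P = idem_props[OF assms(1-3) cc]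
  have Z: "\<forall>m. 0 < m \<longrightarrow> m \<le> n \<longrightarrow> (fps_nth e m) = 0" for n
  proof (induction n)
    case 0 then show ?case by simp
  next
    case (Suc n)
    have "(fps_nth e (Suc n)) = (\<Sum>i\<le>Suc n. (fps_nth e i) * (\<sigma> ^^ i) ((fps_nth e (Suc n - i))))"
      using arg_cong[OF assms(4), of "\<lambda>f. (fps_nth f (Suc n))"] by (simp add: skew_nth)
    also have "\<dots> = (\<Sum>i\<le>Suc n. (if i = 0 then c * (fps_nth e (Suc n)) else 0) + (if i = Suc n then (fps_nth e (Suc n)) * c else 0))"
    proof (rule sum.cong)
      fix i assume "i \<in> {..Suc n}"
      then consider "i = 0" | "i = Suc n" | "0 < i" "i \<le> n" by fastforce
      then show "(fps_nth e i) * (\<sigma> ^^ i) ((fps_nth e (Suc n - i))) = (if i = 0 then c * (fps_nth e (Suc n)) else 0) + (if i = Suc n then (fps_nth e (Suc n)) * c else 0)"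
      proof cases
        case 1 then show ?thesis by (simp add: c_def)
      next
        case 2 then show ?thesis using pow_fix[of \<sigma>, OF P(1)] by (simp add: c_def del: funpow.simps)
      next
        case 3 then show ?thesis using Suc.IH by simp
      qed
    qed simp
    also have "\<dots> = c * (fps_nth e (Suc n)) + (fps_nth e (Suc n)) * c" by (simp add: sum.distrib)
    also have "\<dots> = 2 * (c * (fps_nth e (Suc n)))" using P(2)[of "(fps_nth e (Suc n))"] by (simp add: algebra_simps mult_2)
    finally have E: "(fps_nth e (Suc n)) = 2 * (c * (fps_nth e (Suc n)))" .
    hence "c * (fps_nth e (Suc n)) = c * (2 * (c * (fps_nth e (Suc n))))" by simp
    also have "\<dots> = 2 * (c * (fps_nth e (Suc n)))"
      by (simp add: mult_2 distrib_left mult.assoc[symmetric] cc)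
    finally have "c * (fps_nth e (Suc n)) = 0" by (simp add: mult_2)
    hence "(fps_nth e (Suc n)) = 0" using E by simp
    then show ?case using Suc.IH le_Suc_eq by blast
  qed
  show "e = fps_const ((fps_nth e 0))"
  proof (rule fps_ext)
    fix n show "(fps_nth e n) = fps_nth (fps_const (fps_nth e 0)) n" using Z[of n] by (cases n) auto
  qed
qed

theorem lemma3p2:
  fixes \<sigma> :: "'a::ring_1 \<Rightarrow> 'a"
  assumes "ring_endo \<sigma>"
    and "\<sigma> \<noteq> (\<lambda>_. 0)"
    and "\<sigma> \<noteq> id"
    and "\<sigma> 1 = 1"
    and "right_sigma_reversible \<sigma>"
  shows "{e. skew_mult \<sigma> e e = e} = fps_const ` {c. c * c = c}
    \<and> (\<forall>e. skew_mult \<sigma> e e = e \<longrightarrow> (\<forall>f. skew_mult \<sigma> e f = skew_mult \<sigma> f e))"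
proof -
  have z: "(\<sigma> ^^ i) 0 = 0" for i
  proof (induction i)
    case (Suc i)
    have "\<sigma> 0 = 0" using endo_diff[OF assms(1), of 0 0] by simp
    then show ?case using Suc by simp
  qed simp
  have conv: "skew_mult \<sigma> (fps_const c) (fps_const c) = fps_const c" if "c * c = c" for c
  proof (rule fps_ext)
    fix n
    have "(\<Sum>i\<le>n. fps_nth (fps_const c) i * (\<sigma> ^^ i) (fps_nth (fps_const c) (n - i))) = (\<Sum>i\<le>n. if i = 0 then c * fps_nth (fps_const c) n else 0)"
      by (rule sum.cong) (auto simp: z)
    then show "fps_nth (skew_mult \<sigma> (fps_const c) (fps_const c)) n = fps_nth (fps_const c) n"
      using that by (cases n) (simp_all add: skew_nth)
  qed
  have "{e. skew_mult \<sigma> e e = e} = fps_const ` {c. c * c = c}"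
  proof
    show "{e. skew_mult \<sigma> e e = e} \<subseteq> fps_const ` {c. c * c = c}"
      using idem_const[OF assms(1,4,5)] by blast
  qed (use conv in blast)
  moreover have "skew_mult \<sigma> e f = skew_mult \<sigma> f e" if "skew_mult \<sigma> e e = e" for e f
  proof -
    have e: "e = fps_const ((fps_nth e 0))" and c: "(fps_nth e 0) * (fps_nth e 0) = (fps_nth e 0)" using idem_const[OF assms(1,4,5) that] by auto
    note P = idem_props[OF assms(1,4,5) c]
    show ?thesis
    proof (rule fps_ext)
      fix n
      define c0 where "c0 = fps_nth e 0"
      have ez: "fps_nth e k = (if k = 0 then c0 else 0)" for k
        by (metis e fps_nth_fps_const c0_def)
      have sc0: "\<sigma> c0 = c0" using P(1) c0_def by simp
      have "fps_nth (skew_mult \<sigma> e f) n = (\<Sum>i\<le>n. if i = 0 then c0 * (fps_nth f n) else 0)"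
        unfolding skew_nth by (rule sum.cong) (auto simp: ez)
      moreover have "fps_nth (skew_mult \<sigma> f e) n = (\<Sum>i\<le>n. if i = n then (fps_nth f n) * c0 else 0)"
        unfolding skew_nth by (rule sum.cong) (auto simp: ez z pow_fix[of \<sigma>, OF sc0])
      ultimately show "fps_nth (skew_mult \<sigma> e f) n = fps_nth (skew_mult \<sigma> f e) n" using P(2) by (simp add: c0_def)
    qed
  qed
  ultimately show ?thesis by blast
qed

end
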